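(* For $k\ge1$ and $n\in\mathbb Z$, let $E_{k,n}(x_1,\dots,x_k)=\prod_{1\le r\le k}x_r^n\prod_{1\le r\ne s\le k}(x_r-q^{-2}x_s)\in S_k$. Then \[E_{k,n}=\frac{(-1)^{\frac{k(k-1)}2}}{(1-q^{-2})^{k-1}}\,\Upsilon\Big([e_n,[e_{n+2},\cdots,[e_{n+2(k-2)},e_{n+2(k-1)}]_{q^{-4}}\cdots]_{q^{-2(k-1)}}]_{q^{-2k}}\Big),\] where the nested bracket is defined recursively by $X_k=e_{n+2(k-1)}$ and $X_j=[e_{n+2(j-1)},X_{j+1}]_{q^{-2(k-j+1)}}$ for $j=k-1,\dots,1$, the element in question being $X_1$ (so it equals $e_n$ for $k=1$), and $[x,y]_c=xy-c\,yx$.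
   Context: Let $q$ be a formal variable. $U^>_q(L\mathfrak{sl}_2)$ is the $\mathbb C(q)$-algebra generated by $e_r$ ($r\in\mathbb Z$) subject to $(z-q^2w)e(z)e(w)=(q^2z-w)e(w)e(z)$, where $e(z)=\sum_re_rz^{-r}$. The shuffle algebra $S=\bigoplus_{k\ge0}S_k$: $S_k=\mathbb C(q)[x_1^{\pm1},\dots,x_k^{\pm1}]^{S(k)}$, with product $F\star G=\frac{1}{k!\ell!}\mathrm{Sym}_{x_1,\dots,x_{k+\ell}}\big(F(x_1,\dots,x_k)G(x_{k+1},\dots,x_{k+\ell})\prod_{r\le k<r'}\frac{x_r-q^{-2}x_{r'}}{x_r-x_{r'}}\big)$. It is known that $e_r\mapsto x_1^r$ extends to an algebra isomorphism $\Upsilon:U^>_q(L\mathfrak{sl}_2)\to S$. *)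

theory Defs
  imports "HOL-Computational_Algebra.Polynomial" "HOL-Computational_Algebra.Fraction_Field"
          "HOL-Combinatorics.Permutations"
begin

type_synonym K = "complex poly fract"

definition qq :: K where
  "qq = Fract [:0, 1:] 1"

text \<open>An element of S_k is represented by the function it defines on points
  x_0, ..., x_(k-1) of K (only the first k coordinates are used).
  Since K is infinite, a Laurent polynomial is determined by its values
  at points with pairwise distinct nonzero coordinates.\<close>
type_synonym sh = "(nat \<Rightarrow> K) \<Rightarrow> K"

definition shuf :: "nat \<Rightarrow> nat \<Rightarrow> sh \<Rightarrow> sh \<Rightarrow> sh" where
  "shuf k l F G = (\<lambda>x. (1 / of_nat (fact k * fact l)) *
     (\<Sum>\<sigma>\<in>{\<sigma>. \<sigma> permutes {..<k+l}}.
        F (x \<circ> \<sigma>) * G (\<lambda>i. x (\<sigma> (k + i))) *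
        (\<Prod>r<k. \<Prod>r'\<in>{k..<k+l}.
            (x (\<sigma> r) - qq powi (-2) * x (\<sigma> r')) / (x (\<sigma> r) - x (\<sigma> r')))))"

definition qbr :: "nat \<Rightarrow> nat \<Rightarrow> K \<Rightarrow> sh \<Rightarrow> sh \<Rightarrow> sh" where
  "qbr k l c F G = (\<lambda>x. shuf k l F G x - c * shuf l k G F x)"

definition ups_e :: "int \<Rightarrow> sh" where
  "ups_e s = (\<lambda>x. x 0 powi s)"

fun nestY :: "nat \<Rightarrow> int \<Rightarrow> sh" where
  "nestY 0 s = (\<lambda>x. 1)"
| "nestY (Suc 0) s = ups_e s"
| "nestY (Suc (Suc m)) s =
     qbr 1 (Suc m) (qq powi (-2 * (int m + 2))) (ups_e s) (nestY (Suc m) (s + 2))"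

definition Ekn :: "nat \<Rightarrow> int \<Rightarrow> sh" where
  "Ekn k n = (\<lambda>x. (\<Prod>r<k. x r powi n) *
     (\<Prod>r<k. \<Prod>s\<in>{..<k} - {r}. x r - qq powi (-2) * x s))"

end

theory Submission
  imports Defs
begin

lemma lagrange_sum_zero:
  fixes Y :: "'a::field set"
  assumes fin: "finite Y" and c2: "card Y \<ge> 2"
  shows "(\<Sum>y\<in>Y. 1 / (\<Prod>w\<in>Y-{y}. (y - w))) = 0"
proof -
  define P where "P y = (\<Prod>w\<in>Y-{y}. [:-w,1:])" for y
  define c where "c y = 1 / (\<Prod>w\<in>Y-{y}. (y - w))" for y
  define L where "L = (\<Sum>y\<in>Y. smult (c y) (P y))"
  have degP: "degree (P y) = card Y - 1" if "y \<in> Y" for y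
  proof -
    have "degree (P y) = (\<Sum>w\<in>Y-{y}. degree [:-w,(1::'a):])"
      unfolding P_def by (rule degree_prod_eq_sum_degree) auto
    also have "\<dots> = card Y - 1" using that fin by simp
    finally show ?thesis .
  qed
  have coeffP: "coeff (P y) (card Y - 1) = 1" if "y \<in> Y" for y
  proof -
    have "coeff (P y) (card Y - 1) = lead_coeff (P y)" using degP[OF that] by simp
    also have "\<dots> = 1" unfolding P_def lead_coeff_prod by simp
    finally show ?thesis .
  qed
  have polyP: "poly (P y) z = (\<Prod>w\<in>Y-{y}. (z - w))" for y z
    unfolding P_def poly_prod by simp
  have polyL: "poly L z = poly 1 z" if z: "z \<in> Y" for z
  proof -
    have "poly L z = (\<Sum>y\<in>Y. c y * poly (P y) z)" unfolding L_def poly_sum by simp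
    also have "\<dots> = c z * poly (P z) z + (\<Sum>y\<in>Y-{z}. c y * poly (P y) z)"
      using fin z by (simp add: sum.remove)
    also have "(\<Sum>y\<in>Y-{z}. c y * poly (P y) z) = 0"
    proof (rule sum.neutral, intro ballI)
      fix y assume "y \<in> Y - {z}"
      then have "z \<in> Y - {y}" using z by auto
      then have "(\<Prod>w\<in>Y-{y}. (z - w)) = 0"
        using fin by (intro prod_zero) auto
      then show "c y * poly (P y) z = 0" by (simp add: polyP)
    qed
    also have "c z * poly (P z) z = 1"
    proof -
      have "(\<Prod>w\<in>Y-{z}. (z - w)) \<noteq> 0" using fin by (subst prod_zero_iff) auto
      then show ?thesis by (simp add: c_def polyP)
    qed
    finally show ?thesis by simp
  qed
  have degL: "degree L \<le> card Y - 1"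
    unfolding L_def
    by (rule degree_sum_le[OF fin]) (use degP degree_smult_le in fastforce)
  have "L = 1"
    by (rule poly_eqI_degree[of Y]) (use polyL degL c2 in auto)
  then have "coeff L (card Y - 1) = 0" using c2 by simp
  moreover have "coeff L (card Y - 1) = (\<Sum>y\<in>Y. c y)"
    unfolding L_def coeff_sum coeff_smult using coeffP by (intro sum.cong) auto
  ultimately show ?thesis by (simp add: c_def)
qed

lemma prod_neg_swap:
  fixes f g :: "nat \<Rightarrow> 'a::field"
  assumes "finite A"
  shows "(\<Prod>b\<in>A. c * f b) = c ^ card A * (\<Prod>b\<in>A. f b)"
  by (simp add: prod.distrib)

lemma alg1:
  fixes u P T s SA SB :: "'a::field"
  assumes "u \<noteq> 0" "P \<noteq> 0"
  shows "s * T / (u * P) * SA + (- (s * (T * T))) / (u * P) * SB + T / P = T / P * (s / u * SA - s * T / u * SB + 1)"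
  using assms by (simp add: field_simps)

lemma key_generic:
  fixes x :: "nat \<Rightarrow> 'a::field" and t :: 'a
  assumes N: "N = Suc M" and inj: "inj_on x {..<N}" and nz: "\<forall>a<N. x a \<noteq> 0"
    and gen: "\<forall>a<N. \<forall>b<N. a \<noteq> b \<longrightarrow> x a \<noteq> t * x b" and t0: "t \<noteq> 0" and t1: "t \<noteq> 1"
  shows "(\<Sum>a<N. (\<Prod>b\<in>{..<N}-{a}. x b ^ 2) / (\<Prod>b\<in>{..<N}-{a}. (x b - t * x a) * (x a - x b)))
       - t ^ N * (\<Sum>a<N. (\<Prod>b\<in>{..<N}-{a}. x b ^ 2) / (\<Prod>b\<in>{..<N}-{a}. (x a - t * x b) * (x b - x a)))
       = (-1) ^ M * (1 - t)"
proof -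
  define S where "S = {..<N}"
  have finS: "finite S" and cardS: "card S = N" by (auto simp: S_def)
  have cardSa: "card (S - {a}) = M" if "a \<in> S" for a using that cardS N by simp
  have injS: "inj_on x S" using inj by (simp add: S_def)
  have nzS: "x a \<noteq> 0" if "a \<in> S" for a using nz that by (simp add: S_def)
  have genS: "x a \<noteq> t * x b" if "a \<in> S" "b \<in> S" "a \<noteq> b" for a b using gen that by (simp add: S_def)
  define X where "X = x ` S"
  define X' where "X' = (\<lambda>b. x b / t) ` S"
  define Y where "Y = insert 0 (X \<union> X')"
  have injS': "inj_on (\<lambda>b. x b / t) S" using injS t0 by (auto simp: inj_on_def)
  have disj: "X \<inter> X' = {}"
  proof -
    { fix a b assume ab: "a \<in> S" "b \<in> S" "x a = x b / t"
      then have "t * x a = x b" using t0 by (simp add: field_simps)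
      then have False
      proof (cases "a = b")
        case True then show False using \<open>t * x a = x b\<close> t1 nzS[OF ab(1)] by simp
      next
        case False then show False using genS[OF ab(2) ab(1)] \<open>t * x a = x b\<close> by simp
      qed }
    then show ?thesis unfolding X_def X'_def by blast
  qed
  have zX: "0 \<notin> X" using nzS by (auto simp: X_def)
  have zX': "0 \<notin> X'" using nzS t0 by (auto simp: X'_def)
  have finX: "finite X" "finite X'" using finS by (auto simp: X_def X'_def)
  have cardX: "card X = N" "card X' = N"
    using card_image[OF injS] card_image[OF injS'] cardS by (auto simp: X_def X'_def)
  have cardY: "card Y = Suc (N + N)"
    unfolding Y_def using finX zX zX' disj cardX by (simp add: card_Un_disjoint)
  have finY: "finite Y" using finX by (simp add: Y_def)
  have lag: "(\<Sum>y\<in>Y. 1 / (\<Prod>w\<in>Y-{y}. (y - w))) = 0"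
    by (rule lagrange_sum_zero[OF finY]) (simp add: cardY N)
  have split: "(\<Sum>y\<in>Y. f y) = (\<Sum>a\<in>S. f (x a)) + (\<Sum>a\<in>S. f (x a / t)) + f 0" for f :: "'a \<Rightarrow> 'a"
  proof -
    have "(\<Sum>y\<in>Y. f y) = f 0 + ((\<Sum>y\<in>X. f y) + (\<Sum>y\<in>X'. f y))"
      unfolding Y_def using finX zX zX' disj by (simp add: sum.union_disjoint)
    also have "(\<Sum>y\<in>X. f y) = (\<Sum>a\<in>S. f (x a))"
      unfolding X_def by (rule sum.reindex[OF injS, unfolded comp_def])
    also have "(\<Sum>y\<in>X'. f y) = (\<Sum>a\<in>S. f (x a / t))"
      unfolding X'_def by (rule sum.reindex[OF injS', unfolded comp_def])
    finally show ?thesis by simp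
  qed
  define PX where "PX = (\<Prod>b\<in>S. x b ^ 2)"
  define P where "P a = (\<Prod>b\<in>S-{a}. x b ^ 2)" for a
  define D where "D a = (\<Prod>b\<in>S-{a}. (x a - x b))" for a
  define D' where "D' a = (\<Prod>b\<in>S-{a}. (x b - x a))" for a
  define G where "G a = (\<Prod>b\<in>S-{a}. (x b - t * x a))" for a
  define H where "H a = (\<Prod>b\<in>S-{a}. (x a - t * x b))" for a
  have PX0: "PX \<noteq> 0" unfolding PX_def using finS nzS by (simp add: prod_zero_iff)
  have PXa: "PX = x a ^ 2 * P a" if "a \<in> S" for a
    unfolding PX_def P_def using finS that by (simp add: prod.remove)
  have D0: "D a \<noteq> 0" if "a \<in> S" for a
    unfolding D_def using finS that injS by (auto simp: prod_zero_iff inj_on_def)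
  have G0: "G a \<noteq> 0" if "a \<in> S" for a
    unfolding G_def using finS that genS by (auto simp: prod_zero_iff)
  have H0: "H a \<noteq> 0" if "a \<in> S" for a
    unfolding H_def using finS that genS by (auto simp: prod_zero_iff)
  have D'D: "D' a = (-1) ^ M * D a" if "a \<in> S" for a
  proof -
    have "D' a = (\<Prod>b\<in>S-{a}. (-1) * (x a - x b))" unfolding D'_def by (intro prod.cong) auto
    also have "\<dots> = (-1) ^ card (S-{a}) * D a" unfolding D_def
      by (simp only: prod.distrib prod_constant)
    also have "\<dots> = (-1) ^ M * D a" using cardSa[OF that] by simp
    finally show ?thesis .
  qed
  have nodeA: "(\<Prod>w\<in>Y-{x a}. (x a - w)) = D a * ((x a - x a / t) * ((-1 / t) ^ M * G a)) * x a"
    if a: "a \<in> S" for a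
  proof -
    have xaX: "x a \<in> X" "x a \<notin> X'" "x a \<noteq> 0" using a disj nzS by (auto simp: X_def)
    have "Y - {x a} = insert 0 ((X - {x a}) \<union> X')" unfolding Y_def using xaX by auto
    then have "(\<Prod>w\<in>Y-{x a}. (x a - w)) = x a * ((\<Prod>w\<in>X-{x a}. (x a - w)) * (\<Prod>w\<in>X'. (x a - w)))"
      using finX zX zX' disj by (simp add: prod.union_disjoint Int_Diff Diff_Int_distrib2)
    also have "X - {x a} = x ` (S - {a})" unfolding X_def using injS a by (auto simp: inj_on_def)
    also have "(\<Prod>w\<in>x ` (S - {a}). (x a - w)) = D a"
      unfolding D_def by (subst prod.reindex) (use injS in \<open>auto intro: inj_on_subset\<close>)
    also have "(\<Prod>w\<in>X'. (x a - w)) = (\<Prod>b\<in>S. (x a - x b / t))"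
      unfolding X'_def by (subst prod.reindex[OF injS']) auto
    also have "\<dots> = (x a - x a / t) * (\<Prod>b\<in>S-{a}. (x a - x b / t))"
      using finS a by (simp add: prod.remove)
    also have "(\<Prod>b\<in>S-{a}. (x a - x b / t)) = (\<Prod>b\<in>S-{a}. (-1 / t) * (x b - t * x a))"
      using t0 by (intro prod.cong) (auto simp: field_simps)
    also have "\<dots> = (-1 / t) ^ card (S-{a}) * G a"
      unfolding G_def by (simp only: prod.distrib prod_constant)
    also have "\<dots> = (-1 / t) ^ M * G a" using cardSa[OF a] by simp
    finally show ?thesis by (simp add: ac_simps)
  qed
  have nodeB: "(\<Prod>w\<in>Y-{x a / t}. (x a / t - w)) = (x a / t) * (((x a / t - x a) * ((1 / t) ^ M * H a)) * ((1 / t) ^ M * D a))"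
    if a: "a \<in> S" for a
  proof -
    have xaX: "x a / t \<notin> X" "x a / t \<in> X'" "x a / t \<noteq> 0" using a disj nzS t0 by (auto simp: X'_def)
    have Yeq: "Y - {x a / t} = insert 0 (X \<union> (X' - {x a / t}))" unfolding Y_def using xaX by auto
    have u: "prod f (X \<union> (X' - {x a / t})) = prod f X * prod f (X' - {x a / t})" for f :: "'a \<Rightarrow> 'a"
      by (rule prod.union_disjoint) (use finX disj in auto)
    then have "(\<Prod>w\<in>Y-{x a / t}. (x a / t - w)) = x a / t * ((\<Prod>w\<in>X. (x a / t - w)) * (\<Prod>w\<in>X' - {x a / t}. (x a / t - w)))"
      using finX zX zX' disj by (simp add: u Yeq)
    also have "X' - {x a / t} = (\<lambda>b. x b / t) ` (S - {a})" unfolding X'_def using injS' a by (auto simp: inj_on_def)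
    also have "(\<Prod>w\<in>(\<lambda>b. x b / t) ` (S - {a}). (x a / t - w)) = (\<Prod>b\<in>S - {a}. (1 / t) * (x a - x b))"
      by (subst prod.reindex) (use injS' in \<open>auto intro: inj_on_subset prod.cong simp: diff_divide_distrib\<close>)
    also have "\<dots> = (1 / t) ^ card (S-{a}) * D a"
      unfolding D_def by (simp only: prod.distrib prod_constant)
    also have "(\<Prod>w\<in>X. (x a / t - w)) = (\<Prod>b\<in>S. (x a / t - x b))"
      unfolding X_def by (subst prod.reindex[OF injS]) auto
    also have "\<dots> = (x a / t - x a) * (\<Prod>b\<in>S-{a}. (x a / t - x b))"
      using finS a by (simp add: prod.remove)
    also have "(\<Prod>b\<in>S-{a}. (x a / t - x b)) = (\<Prod>b\<in>S-{a}. (1 / t) * (x a - t * x b))"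
      using t0 by (intro prod.cong) (auto simp: field_simps)
    also have "\<dots> = (1 / t) ^ card (S-{a}) * H a"
      unfolding H_def by (simp only: prod.distrib prod_constant)
    finally show ?thesis using cardSa[OF a] by (simp add: ac_simps)
  qed
  define Px where "Px = (\<Prod>b\<in>S. x b)"
  have PXPx: "PX = Px * Px" unfolding PX_def Px_def by (simp add: power2_eq_square prod.distrib)
  have node0: "(\<Prod>w\<in>Y-{0}. (0 - w)) = ((-1) ^ N * Px) * ((-1 / t) ^ N * Px)"
  proof -
    have "Y - {0} = X \<union> X'" unfolding Y_def using zX zX' by auto
    then have "(\<Prod>w\<in>Y-{0}. (0 - w)) = (\<Prod>w\<in>X. (0 - w)) * (\<Prod>w\<in>X'. (0 - w))"
      using finX disj by (simp add: prod.union_disjoint)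
    also have "(\<Prod>w\<in>X. (0 - w)) = (\<Prod>b\<in>S. (-1) * x b)"
      unfolding X_def by (subst prod.reindex[OF injS]) auto
    also have "\<dots> = (-1) ^ N * Px" unfolding Px_def by (simp only: prod.distrib prod_constant cardS)
    also have "(\<Prod>w\<in>X'. (0 - w)) = (\<Prod>b\<in>S. (-1 / t) * x b)"
      unfolding X'_def by (subst prod.reindex[OF injS']) auto
    also have "\<dots> = (-1 / t) ^ N * Px" unfolding Px_def by (simp only: prod.distrib prod_constant cardS)
    finally show ?thesis .
  qed
  define s :: 'a where "s = (-1) ^ M"
  have s: "s = 1 \<or> s = -1" unfolding s_def by (cases "even M") auto
  have sN: "(-1) ^ N = - s" unfolding s_def N by simp
  have t10: "t - 1 \<noteq> 0" "1 - t \<noteq> 0" using t1 by auto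
  have Px0: "Px \<noteq> 0" using PX0 PXPx by auto
  define A where "A a = P a / (G a * D a)" for a
  define B where "B a = P a / (H a * D' a)" for a
  have eA: "1 / (\<Prod>w\<in>Y-{x a}. (x a - w)) = (s * t ^ N / ((t - 1) * PX)) * A a" if a: "a \<in> S" for a
    unfolding nodeA[OF a] A_def PXa[OF a] power_divide s_def[symmetric] N
    using s D0[OF a] G0[OF a] nzS[OF a] t0 t10 PX0 PXa[OF a]
    by (elim disjE) (simp_all add: field_simps power2_eq_square)
  have eB: "1 / (\<Prod>w\<in>Y-{x a / t}. (x a / t - w)) = (- (s * t ^ (2 * N)) / ((t - 1) * PX)) * B a" if a: "a \<in> S" for a
    unfolding nodeB[OF a] B_def PXa[OF a] power_divide D'D[OF a] s_def[symmetric] N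
    using s D0[OF a] H0[OF a] nzS[OF a] t0 t10 PX0 PXa[OF a]
    by (elim disjE) (simp_all add: field_simps power2_eq_square power_mult)
  have e0: "1 / (\<Prod>w\<in>Y-{0}. (0 - w)) = t ^ N / PX"
    unfolding node0 PXPx power_divide sN using s t0 Px0 by (elim disjE) (simp_all add: field_simps power2_eq_square)
  have "0 = (\<Sum>a\<in>S. (s * t ^ N / ((t - 1) * PX)) * A a) + (\<Sum>a\<in>S. (- (s * t ^ (2 * N)) / ((t - 1) * PX)) * B a) + t ^ N / PX"
    using lag unfolding split e0 by (simp add: eA eB)
  also have "\<dots> = (t ^ N / PX) * ((s / (t - 1)) * (\<Sum>a\<in>S. A a) - (s * t ^ N / (t - 1)) * (\<Sum>a\<in>S. B a) + 1)"
    unfolding sum_distrib_left[symmetric]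
    by (simp only: power_mult power2_eq_square mult.commute[of 2 N]) (rule alg1[OF t10(1) PX0])
  finally have "(s / (t - 1)) * (\<Sum>a\<in>S. A a) - (s * t ^ N / (t - 1)) * (\<Sum>a\<in>S. B a) + 1 = 0"
    using t0 PX0 by simp
  then have main: "(\<Sum>a\<in>S. A a) - t ^ N * (\<Sum>a\<in>S. B a) = s * (1 - t)"
    using s t10 by (elim disjE) (simp_all add: field_simps power2_eq_square)
  have "(\<Sum>a<N. (\<Prod>b\<in>{..<N}-{a}. x b ^ 2) / (\<Prod>b\<in>{..<N}-{a}. (x b - t * x a) * (x a - x b))) = (\<Sum>a\<in>S. A a)"
    unfolding A_def P_def G_def D_def S_def by (simp add: prod.distrib)
  moreover have "(\<Sum>a<N. (\<Prod>b\<in>{..<N}-{a}. x b ^ 2) / (\<Prod>b\<in>{..<N}-{a}. (x a - t * x b) * (x b - x a))) = (\<Sum>a\<in>S. B a)"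
    unfolding B_def P_def H_def D'_def S_def by (simp add: prod.distrib)
  ultimately show ?thesis using main by (simp add: s_def)
qed

definition QQ :: "nat \<Rightarrow> 'a::field \<Rightarrow> (nat \<Rightarrow> 'a) \<Rightarrow> nat \<Rightarrow> 'a" where
  "QQ N t x a = (\<Prod>b\<in>{..<N}-{a}. \<Prod>c\<in>{..<N}-{a}-{b}. (x b - t * x c))"
definition FF :: "nat \<Rightarrow> 'a::field \<Rightarrow> (nat \<Rightarrow> 'a) \<Rightarrow> 'a" where
  "FF N t x = (\<Prod>r<N. \<Prod>s\<in>{..<N}-{r}. (x r - t * x s))"
definition T1 :: "nat \<Rightarrow> 'a::field \<Rightarrow> (nat \<Rightarrow> 'a) \<Rightarrow> 'a" where
  "T1 N t x = (\<Sum>a<N. (\<Prod>b\<in>{..<N}-{a}. x b ^ 2) * QQ N t x a * (\<Prod>b\<in>{..<N}-{a}. (x a - t * x b) / (x a - x b)))"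
definition T2 :: "nat \<Rightarrow> 'a::field \<Rightarrow> (nat \<Rightarrow> 'a) \<Rightarrow> 'a" where
  "T2 N t x = (\<Sum>a<N. (\<Prod>b\<in>{..<N}-{a}. x b ^ 2) * QQ N t x a * (\<Prod>b\<in>{..<N}-{a}. (x b - t * x a) / (x b - x a)))"
definition Phi :: "nat \<Rightarrow> 'a::field \<Rightarrow> (nat \<Rightarrow> 'a) \<Rightarrow> 'a" where
  "Phi N t x = T1 N t x - t ^ N * T2 N t x - (-1) ^ (N - 1) * (1 - t) * FF N t x"

lemma FF_split:
  fixes x :: "nat \<Rightarrow> 'a::field"
  assumes a: "a < N"
  shows "FF N t x = QQ N t x a * (\<Prod>b\<in>{..<N}-{a}. (x a - t * x b)) * (\<Prod>b\<in>{..<N}-{a}. (x b - t * x a))"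
proof -
  define S where "S = {..<N}"
  have aS: "a \<in> S" using a by (simp add: S_def)
  have "FF N t x = (\<Prod>s\<in>S-{a}. (x a - t * x s)) * (\<Prod>r\<in>S-{a}. \<Prod>s\<in>S-{r}. (x r - t * x s))"
    unfolding FF_def S_def[symmetric] using aS by (simp add: prod.remove S_def)
  also have "(\<Prod>r\<in>S-{a}. \<Prod>s\<in>S-{r}. (x r - t * x s)) = (\<Prod>r\<in>S-{a}. (x r - t * x a) * (\<Prod>s\<in>S-{a}-{r}. (x r - t * x s)))"
  proof (rule prod.cong[OF refl])
    fix r assume r: "r \<in> S - {a}"
    have "S - {r} = insert a (S - {a} - {r})" using r aS by auto
    then show "(\<Prod>s\<in>S-{r}. (x r - t * x s)) = (x r - t * x a) * (\<Prod>s\<in>S-{a}-{r}. (x r - t * x s))"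
      by (simp add: S_def)
  qed
  also have "\<dots> = (\<Prod>r\<in>S-{a}. (x r - t * x a)) * QQ N t x a"
    unfolding QQ_def S_def by (simp add: prod.distrib)
  finally show ?thesis by (simp add: S_def ac_simps)
qed

lemma ident_generic:
  fixes x :: "nat \<Rightarrow> 'a::field" and t :: 'a
  assumes N: "N = Suc M" and inj: "inj_on x {..<N}" and nz: "\<forall>a<N. x a \<noteq> 0"
    and gen: "\<forall>a<N. \<forall>b<N. a \<noteq> b \<longrightarrow> x a \<noteq> t * x b" and t0: "t \<noteq> 0" and t1: "t \<noteq> 1"
  shows "Phi N t x = 0"
proof -
  have K: "(\<Sum>a<N. (\<Prod>b\<in>{..<N}-{a}. x b ^ 2) / (\<Prod>b\<in>{..<N}-{a}. (x b - t * x a) * (x a - x b)))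
       - t ^ N * (\<Sum>a<N. (\<Prod>b\<in>{..<N}-{a}. x b ^ 2) / (\<Prod>b\<in>{..<N}-{a}. (x a - t * x b) * (x b - x a)))
       = (-1) ^ M * (1 - t)" by (rule key_generic[OF assms])
  define H where "H a = (\<Prod>b\<in>{..<N}-{a}. (x a - t * x b))" for a
  define G where "G a = (\<Prod>b\<in>{..<N}-{a}. (x b - t * x a))" for a
  have G0: "G a \<noteq> 0" if "a < N" for a unfolding G_def using that gen by (auto simp: prod_zero_iff)
  have H0: "H a \<noteq> 0" if "a < N" for a unfolding H_def using that gen by (auto simp: prod_zero_iff)
  have e1: "T1 N t x = FF N t x * (\<Sum>a<N. (\<Prod>b\<in>{..<N}-{a}. x b ^ 2) / (\<Prod>b\<in>{..<N}-{a}. (x b - t * x a) * (x a - x b)))"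
    unfolding T1_def sum_distrib_left
  proof (rule sum.cong[OF refl])
    fix a assume a: "a \<in> {..<N}"
    show "(\<Prod>b\<in>{..<N}-{a}. x b ^ 2) * QQ N t x a * (\<Prod>b\<in>{..<N}-{a}. (x a - t * x b) / (x a - x b)) =
      FF N t x * ((\<Prod>b\<in>{..<N}-{a}. x b ^ 2) / (\<Prod>b\<in>{..<N}-{a}. (x b - t * x a) * (x a - x b)))"
      unfolding FF_split[of a N t x, folded H_def G_def, OF a[simplified]] prod.distrib prod_dividef
        G_def[symmetric] using G0[of a] a by (simp add: field_simps H_def)
  qed
  have e2: "T2 N t x = FF N t x * (\<Sum>a<N. (\<Prod>b\<in>{..<N}-{a}. x b ^ 2) / (\<Prod>b\<in>{..<N}-{a}. (x a - t * x b) * (x b - x a)))"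
    unfolding T2_def sum_distrib_left
  proof (rule sum.cong[OF refl])
    fix a assume a: "a \<in> {..<N}"
    show "(\<Prod>b\<in>{..<N}-{a}. x b ^ 2) * QQ N t x a * (\<Prod>b\<in>{..<N}-{a}. (x b - t * x a) / (x b - x a)) =
      FF N t x * ((\<Prod>b\<in>{..<N}-{a}. x b ^ 2) / (\<Prod>b\<in>{..<N}-{a}. (x a - t * x b) * (x b - x a)))"
      unfolding FF_split[of a N t x, folded H_def G_def, OF a[simplified]] prod.distrib prod_dividef
        H_def[symmetric] using H0[of a] a by (simp add: field_simps G_def)
  qed
  define SA where "SA = (\<Sum>a<N. (\<Prod>b\<in>{..<N}-{a}. x b ^ 2) / (\<Prod>b\<in>{..<N}-{a}. (x b - t * x a) * (x a - x b)))"
  define SB where "SB = (\<Sum>a<N. (\<Prod>b\<in>{..<N}-{a}. x b ^ 2) / (\<Prod>b\<in>{..<N}-{a}. (x a - t * x b) * (x b - x a)))"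
  have "Phi N t x = FF N t x * (SA - t ^ N * SB - (-1) ^ M * (1 - t))"
    unfolding Phi_def e1 e2 SA_def[symmetric] SB_def[symmetric] by (simp add: N algebra_simps)
  also have "SA - t ^ N * SB = (-1) ^ M * (1 - t)" using K unfolding SA_def SB_def .
  finally show ?thesis by simp
qed

definition RF :: "'a::field set \<Rightarrow> ('a \<Rightarrow> 'a) \<Rightarrow> bool" where
  "RF E f \<longleftrightarrow> (\<exists>p n. \<forall>z. z \<notin> E \<longrightarrow> f z = poly p z / (\<Prod>e\<in>E. (z - e)) ^ n)"

lemma W_nz: "finite E \<Longrightarrow> z \<notin> E \<Longrightarrow> (\<Prod>e\<in>E. (z - e)) \<noteq> (0::'a::field)"
  by (auto simp: prod_zero_iff)

lemma poly_W: "poly (\<Prod>e\<in>E. [:-e, 1:]) z = (\<Prod>e\<in>E. (z - e :: 'a::field))"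
  by (induction E rule: infinite_finite_induct) (auto simp: left_diff_distrib)

lemma RF_const: "RF E (\<lambda>z. c)"
  unfolding RF_def by (rule exI[of _ "[:c:]"], rule exI[of _ 0]) simp

lemma RF_id: "RF E (\<lambda>z. z)"
  unfolding RF_def by (rule exI[of _ "[:0, 1:]"], rule exI[of _ 0]) simp

lemma RF_add:
  assumes E: "finite E" and f: "RF E f" and g: "RF E g"
  shows "RF E (\<lambda>z. f z + g z)"
proof -
  obtain p n where p: "\<And>z. z \<notin> E \<Longrightarrow> f z = poly p z / (\<Prod>e\<in>E. (z - e)) ^ n" using f unfolding RF_def by blast
  obtain q m where q: "\<And>z. z \<notin> E \<Longrightarrow> g z = poly q z / (\<Prod>e\<in>E. (z - e)) ^ m" using g unfolding RF_def by blast
  define Wp where "Wp = (\<Prod>e\<in>E. [:-e, 1:])"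
  show ?thesis unfolding RF_def
  proof (intro exI allI impI)
    fix z assume z: "z \<notin> E"
    have W: "(\<Prod>e\<in>E. (z - e)) \<noteq> 0" using W_nz[OF E z] .
    show "f z + g z = poly (p * Wp ^ m + q * Wp ^ n) z / (\<Prod>e\<in>E. (z - e)) ^ (n + m)"
      using W unfolding p[OF z] q[OF z] by (simp add: Wp_def poly_W power_add field_simps)
  qed
qed

lemma RF_mult:
  assumes E: "finite E" and f: "RF E f" and g: "RF E g"
  shows "RF E (\<lambda>z. f z * g z)"
proof -
  obtain p n where p: "\<And>z. z \<notin> E \<Longrightarrow> f z = poly p z / (\<Prod>e\<in>E. (z - e)) ^ n" using f unfolding RF_def by blast
  obtain q m where q: "\<And>z. z \<notin> E \<Longrightarrow> g z = poly q z / (\<Prod>e\<in>E. (z - e)) ^ m" using g unfolding RF_def by blast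
  show ?thesis unfolding RF_def
  proof (intro exI allI impI)
    fix z assume z: "z \<notin> E"
    show "f z * g z = poly (p * q) z / (\<Prod>e\<in>E. (z - e)) ^ (n + m)"
      unfolding p[OF z] q[OF z] by (simp add: power_add)
  qed
qed

lemma RF_uminus:
  assumes f: "RF E f"
  shows "RF E (\<lambda>z. - f z)"
proof -
  obtain p n where p: "\<And>z. z \<notin> E \<Longrightarrow> f z = poly p z / (\<Prod>e\<in>E. (z - e)) ^ n" using f unfolding RF_def by blast
  show ?thesis unfolding RF_def
    by (rule exI[of _ "-p"], rule exI[of _ n]) (simp add: p)
qed

lemma RF_minus:
  assumes E: "finite E" and f: "RF E f" and g: "RF E g"
  shows "RF E (\<lambda>z. f z - g z)"
  using RF_add[OF E f RF_uminus[OF g]] by simp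

lemma RF_inv_lin:
  assumes E: "finite E" and e: "e \<in> E"
  shows "RF E (\<lambda>z. 1 / (z - e))"
  unfolding RF_def
proof (intro exI allI impI)
  fix z assume z: "z \<notin> E"
  have W: "(\<Prod>e\<in>E. (z - e)) = (z - e) * (\<Prod>e\<in>E-{e}. (z - e))" using E e by (simp add: prod.remove)
  have ne: "(\<Prod>e\<in>E-{e}. (z - e)) \<noteq> 0" "z - e \<noteq> 0" using E z e by (auto simp: prod_zero_iff)
  show "1 / (z - e) = poly (\<Prod>e\<in>E-{e}. [:-e, 1:]) z / (\<Prod>e\<in>E. (z - e)) ^ 1"
    using ne unfolding W poly_W by simp
qed

lemma RF_sum:
  assumes E: "finite E" and f: "\<And>i. i \<in> A \<Longrightarrow> RF E (\<lambda>z. f z i)"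
  shows "RF E (\<lambda>z. sum (f z) A)"
  using f
proof (induction A rule: infinite_finite_induct)
  case (infinite A) then show ?case by (simp add: RF_const)
next
  case empty then show ?case by (simp add: RF_const)
next
  case (insert i A)
  then show ?case by (simp add: RF_add[OF E])
qed

lemma RF_prod:
  assumes E: "finite E" and f: "\<And>i. i \<in> A \<Longrightarrow> RF E (\<lambda>z. f z i)"
  shows "RF E (\<lambda>z. prod (f z) A)"
  using f
proof (induction A rule: infinite_finite_induct)
  case (infinite A) then show ?case by (simp add: RF_const)
next
  case empty then show ?case by (simp add: RF_const)
next
  case (insert i A)
  then show ?case by (simp add: RF_mult[OF E])
qed

lemma RF_power:
  assumes E: "finite E" and f: "RF E f"
  shows "RF E (\<lambda>z. f z ^ k)"
proof (induction k)
  case 0 then show ?case by (simp add: RF_const)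
next
  case (Suc k) then show ?case using RF_mult[OF E f Suc] by simp
qed

lemma RF_upd: "RF E (\<lambda>z. (x(m := z)) b)"
  by (cases "b = m") (simp_all add: RF_id RF_const)

lemma RF_div_pair:
  fixes x :: "nat \<Rightarrow> 'a::field"
  assumes f: "RF (x ` ({..<N} - {m})) f" and ab: "a < N" "b < N" "a \<noteq> b" and inj: "inj_on x {..<N}"
  shows "RF (x ` ({..<N} - {m})) (\<lambda>z. f z / ((x(m := z)) a - (x(m := z)) b))"
proof -
  let ?E = "x ` ({..<N} - {m})"
  have E: "finite ?E" by simp
  have inv: "RF ?E (\<lambda>z. 1 / ((x(m := z)) a - (x(m := z)) b))"
  proof (cases "a = m")
    case True
    then have "x b \<in> ?E" using ab by auto
    then show ?thesis using True ab RF_inv_lin[OF E] by simp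
  next
    case False
    show ?thesis
    proof (cases "b = m")
      case True
      then have "x a \<in> ?E" using ab False by auto
      then have "RF ?E (\<lambda>z. - (1 / (z - x a)))" by (intro RF_uminus RF_inv_lin[OF E])
      moreover have "(\<lambda>z. - (1 / (z - x a))) = (\<lambda>z. 1 / ((x(m := z)) a - (x(m := z)) b))"
        using True False by (auto simp: fun_eq_iff minus_divide_right)
      ultimately show ?thesis by simp
    next
      case False
      then show ?thesis using \<open>a \<noteq> m\<close> by (simp add: RF_const)
    qed
  qed
  show ?thesis using RF_mult[OF E f inv] by simp
qed

lemma RF_Phi:
  fixes x :: "nat \<Rightarrow> 'a::field"
  assumes inj: "inj_on x {..<N}"
  shows "RF (x ` ({..<N} - {m})) (\<lambda>z. Phi N t (x(m := z)))"
proof -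
  have E: "finite (x ` ({..<N} - {m}))" by simp
  show ?thesis
    unfolding Phi_def T1_def T2_def QQ_def FF_def
    apply (intro RF_minus[OF E] RF_mult[OF E] RF_sum[OF E] RF_prod[OF E] RF_const RF_power[OF E] RF_upd
        RF_div_pair[OF _ _ _ _ inj])
    apply auto
    done
qed

lemma Phi_zero:
  fixes x :: "nat \<Rightarrow> 'a::field" and t :: 'a
  assumes inf: "infinite (UNIV::'a set)" and N: "N = Suc M" and t0: "t \<noteq> 0" and t1: "t \<noteq> 1"
    and inj: "inj_on x {..<N}"
  shows "Phi N t x = 0"
proof -
  have claim: "\<forall>x. inj_on x {..<N} \<and> (\<forall>i. m \<le> i \<and> i < N \<longrightarrow> x i \<noteq> 0 \<and> (\<forall>b<N. b \<noteq> i \<longrightarrow> x i \<noteq> t * x b \<and> x b \<noteq> t * x i))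
      \<longrightarrow> Phi N t x = 0" if "m \<le> N" for m
    using that
  proof (induction m)
    case 0
    show ?case
    proof (intro allI impI)
      fix x :: "nat \<Rightarrow> 'a" assume H: "inj_on x {..<N} \<and> (\<forall>i. 0 \<le> i \<and> i < N \<longrightarrow> x i \<noteq> 0 \<and> (\<forall>b<N. b \<noteq> i \<longrightarrow> x i \<noteq> t * x b \<and> x b \<noteq> t * x i))"
      show "Phi N t x = 0"
        by (rule ident_generic[OF N _ _ _ t0 t1]) (use H in auto)
    qed
  next
    case (Suc m)
    then have mN: "m < N" by simp
    show ?case
    proof (intro allI impI)
      fix x :: "nat \<Rightarrow> 'a"
      assume H: "inj_on x {..<N} \<and> (\<forall>i. Suc m \<le> i \<and> i < N \<longrightarrow> x i \<noteq> 0 \<and> (\<forall>b<N. b \<noteq> i \<longrightarrow> x i \<noteq> t * x b \<and> x b \<noteq> t * x i))"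
      have injx: "inj_on x {..<N}" using H by blast
      have Hi: "\<And>i b. Suc m \<le> i \<Longrightarrow> i < N \<Longrightarrow> b < N \<Longrightarrow> b \<noteq> i \<Longrightarrow> x i \<noteq> t * x b \<and> x b \<noteq> t * x i"
        and Hz: "\<And>i. Suc m \<le> i \<Longrightarrow> i < N \<Longrightarrow> x i \<noteq> 0" using H by auto
      define E where "E = x ` ({..<N} - {m})"
      define Bad where "Bad = insert 0 (E \<union> (\<lambda>b. t * x b) ` {..<N} \<union> (\<lambda>b. x b / t) ` {..<N})"
      have finE: "finite E" and finBad: "finite Bad" by (auto simp: E_def Bad_def)
      have good: "Phi N t (x(m := z)) = 0" if z: "z \<notin> Bad" for z
      proof -
        have zE: "z \<notin> E" "z \<noteq> 0" "\<And>b. b < N \<Longrightarrow> z \<noteq> t * x b" "\<And>b. b < N \<Longrightarrow> z \<noteq> x b / t"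
          using z by (auto simp: Bad_def)
        have zE': "\<And>b. b < N \<Longrightarrow> x b \<noteq> t * z"
        proof
          fix b assume "b < N" "x b = t * z"
          then have "z = x b / t" using t0 by (simp add: field_simps)
          then show False using zE(4)[OF \<open>b < N\<close>] by simp
        qed
        have inj': "inj_on (x(m := z)) {..<N}"
          using injx zE(1) unfolding inj_on_def E_def by (auto simp: image_iff split: if_splits)
        have IH: "\<forall>x. inj_on x {..<N} \<and> (\<forall>i. m \<le> i \<and> i < N \<longrightarrow> x i \<noteq> 0 \<and> (\<forall>b<N. b \<noteq> i \<longrightarrow> x i \<noteq> t * x b \<and> x b \<noteq> t * x i))
          \<longrightarrow> Phi N t x = 0" using Suc.IH mN by simp
        have cond: "(x(m := z)) i \<noteq> 0 \<and> (\<forall>b<N. b \<noteq> i \<longrightarrow> (x(m := z)) i \<noteq> t * (x(m := z)) b \<and> (x(m := z)) b \<noteq> t * (x(m := z)) i)"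
          if i: "m \<le> i" "i < N" for i
        proof -
          have a: "(x(m := z)) i \<noteq> 0" using i zE Hz by (cases "i = m") auto
          have b: "(x(m := z)) i \<noteq> t * (x(m := z)) b \<and> (x(m := z)) b \<noteq> t * (x(m := z)) i"
            if b: "b < N" "b \<noteq> i" for b
          proof (cases "i = m")
            case True then show ?thesis using b zE zE' by auto
          next
            case False
            then have "Suc m \<le> i" using i by simp
            then show ?thesis using b zE zE' Hi[of i b] i by (cases "b = m") (auto simp: mult.commute)
          qed
          show ?thesis using a b by blast
        qed
        show ?thesis using IH inj' cond by blast
      qed
      obtain p n where pn: "\<And>z. z \<notin> E \<Longrightarrow> Phi N t (x(m := z)) = poly p z / (\<Prod>e\<in>E. (z - e)) ^ n"
        using RF_Phi[OF injx, of m t] unfolding RF_def E_def by blast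
      have p0: "p = 0"
      proof (rule ccontr)
        assume "p \<noteq> 0"
        then have fin: "finite {z. poly p z = 0}" by (rule poly_roots_finite)
        have "UNIV \<subseteq> Bad \<union> E \<union> {z. poly p z = 0}"
        proof
          fix z :: 'a
          show "z \<in> Bad \<union> E \<union> {z. poly p z = 0}"
          proof (cases "z \<in> Bad \<union> E")
            case False
            then have "poly p z = 0" using good[of z] pn[of z] W_nz[OF finE, of z] by auto
            then show ?thesis by simp
          qed auto
        qed
        then have "finite (UNIV :: 'a set)" using fin finE finBad by (meson finite_UnI finite_subset)
        then show False using inf by simp
      qed
      have "x m \<notin> E" using injx mN unfolding E_def inj_on_def by auto
      from pn[OF this] show "Phi N t x = 0" by (simp add: p0)
    qed
  qed
  show ?thesis using claim[of N] inj by auto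
qed

lemma of_nat_K_inj: "(of_nat a :: K) = of_nat b \<Longrightarrow> a = b"
  by (simp add: of_nat_fract eq_fract)

lemma of_nat_K_nz: "n \<noteq> 0 \<Longrightarrow> (of_nat n :: K) \<noteq> 0"
  using of_nat_K_inj[of n 0] by auto

lemma infinite_K: "infinite (UNIV :: K set)"
proof
  assume "finite (UNIV :: K set)"
  then have "finite (range (of_nat :: nat \<Rightarrow> K))" by (rule finite_subset[rotated]) auto
  moreover have "inj (of_nat :: nat \<Rightarrow> K)" by (auto intro: injI of_nat_K_inj)
  ultimately show False by (simp add: finite_image_iff)
qed

lemma qq_nz: "qq \<noteq> 0"
  by (simp add: qq_def eq_fract fract_expand)

lemma qq_sq_ne1: "qq ^ 2 \<noteq> 1"
  by (simp add: qq_def eq_fract fract_expand power2_eq_square one_pCons)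

lemma t_nz: "qq powi (-2) \<noteq> 0"
  using qq_nz by simp

lemma t_ne1: "qq powi (-2) \<noteq> 1"
  using qq_nz qq_sq_ne1 by (simp add: power_int_minus field_simps)

lemma sum_perm_eval:
  fixes h :: "nat \<Rightarrow> K"
  assumes S: "finite S" and i: "i \<in> S"
  shows "(\<Sum>\<sigma>\<in>{\<sigma>. \<sigma> permutes S}. h (\<sigma> i)) = of_nat (fact (card S - 1)) * (\<Sum>a\<in>S. h a)"
proof -
  let ?P = "{\<sigma>. \<sigma> permutes S}"
  have same: "(\<Sum>\<sigma>\<in>?P. h (\<sigma> i')) = (\<Sum>\<sigma>\<in>?P. h (\<sigma> i))" if i': "i' \<in> S" for i'
  proof -
    have "(\<Sum>\<sigma>\<in>?P. h (\<sigma> i)) = (\<Sum>\<sigma>\<in>?P. h ((\<sigma> \<circ> Transposition.transpose i' i) i))"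
      by (rule sum_permutations_compose_right[OF permutes_swap_id[OF i' i], of "\<lambda>\<sigma>. h (\<sigma> i)"])
    also have "\<dots> = (\<Sum>\<sigma>\<in>?P. h (\<sigma> i'))" by simp
    finally show ?thesis by simp
  qed
  have "of_nat (card S) * (\<Sum>\<sigma>\<in>?P. h (\<sigma> i)) = (\<Sum>i'\<in>S. \<Sum>\<sigma>\<in>?P. h (\<sigma> i'))"
    using same by simp
  also have "\<dots> = (\<Sum>\<sigma>\<in>?P. \<Sum>i'\<in>S. h (\<sigma> i'))" by (rule sum.swap)
  also have "\<dots> = (\<Sum>\<sigma>\<in>?P. \<Sum>a\<in>S. h a)"
  proof (rule sum.cong[OF refl])
    fix \<sigma> assume "\<sigma> \<in> ?P"
    then have p: "\<sigma> permutes S" by simp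
    show "(\<Sum>i'\<in>S. h (\<sigma> i')) = (\<Sum>a\<in>S. h a)"
      using sum.reindex[OF permutes_inj_on[OF p], of h S] permutes_image[OF p] by (simp add: comp_def)
  qed
  also have "\<dots> = of_nat (fact (card S)) * (\<Sum>a\<in>S. h a)"
    using card_permutations[OF refl S] by simp
  also have "fact (card S) = card S * fact (card S - 1)"
    using i S fact_reduce[of "card S", where 'a=nat] by (auto simp: card_gt_0_iff)
  finally have "of_nat (card S) * (\<Sum>\<sigma>\<in>?P. h (\<sigma> i)) = of_nat (card S) * (of_nat (fact (card S - 1)) * (\<Sum>a\<in>S. h a))"
    by simp
  moreover have "card S \<noteq> 0" using i S by auto
  then have "(of_nat (card S) :: K) \<noteq> 0" by (rule of_nat_K_nz)
  ultimately show ?thesis by simp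
qed

lemma Ekn_reindex:
  fixes x :: "nat \<Rightarrow> K" and g :: "nat \<Rightarrow> nat"
  assumes inj: "inj_on g {..<j}" and img: "g ` {..<j} = B"
  shows "Ekn j s (\<lambda>i. x (g i)) = (\<Prod>b\<in>B. x b powi s) * (\<Prod>b\<in>B. \<Prod>c\<in>B-{b}. x b - qq powi (-2) * x c)"
proof -
  have "(\<Prod>r<j. x (g r) powi s) = (\<Prod>b\<in>B. x b powi s)"
    using prod.reindex[OF inj, of "\<lambda>b. x b powi s"] img by simp
  moreover have "(\<Prod>r<j. \<Prod>s\<in>{..<j}-{r}. x (g r) - qq powi (-2) * x (g s)) = (\<Prod>b\<in>B. \<Prod>c\<in>B-{b}. x b - qq powi (-2) * x c)"
  proof -
    have "(\<Prod>r<j. \<Prod>s\<in>{..<j}-{r}. x (g r) - qq powi (-2) * x (g s)) = (\<Prod>r<j. \<Prod>c\<in>B-{g r}. x (g r) - qq powi (-2) * x c)"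
    proof (rule prod.cong[OF refl])
      fix r assume r: "r \<in> {..<j}"
      have inj': "inj_on g ({..<j}-{r})" using inj by (rule inj_on_subset) auto
      have "g ` ({..<j}-{r}) = B - {g r}" using inj r img by (auto simp: inj_on_def)
      then show "(\<Prod>s\<in>{..<j}-{r}. x (g r) - qq powi (-2) * x (g s)) = (\<Prod>c\<in>B-{g r}. x (g r) - qq powi (-2) * x c)"
        using prod.reindex[OF inj', of "\<lambda>c. x (g r) - qq powi (-2) * x c"] by simp
    qed
    also have "\<dots> = (\<Prod>b\<in>B. \<Prod>c\<in>B-{b}. x b - qq powi (-2) * x c)"
      using prod.reindex[OF inj, of "\<lambda>b. \<Prod>c\<in>B-{b}. x b - qq powi (-2) * x c"] img by simp
    finally show ?thesis .
  qed
  ultimately show ?thesis unfolding Ekn_def by simp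
qed

lemma perm_img_diff:
  assumes p: "\<sigma> permutes S" and i: "i \<in> S"
  shows "\<sigma> ` (S - {i}) = S - {\<sigma> i}"
  using permutes_image[OF p] permutes_inj[OF p] by (auto simp: inj_eq)

lemma shuf1_eval:
  fixes x :: "nat \<Rightarrow> K" and G :: sh
  assumes N: "N = Suc j" and inj: "inj_on x {..<N}" and nz: "\<forall>r<N. x r \<noteq> 0"
    and G: "\<And>y. inj_on y {..<j} \<Longrightarrow> (\<forall>r<j. y r \<noteq> 0) \<Longrightarrow> G y = Ekn j s y * c0"
  shows "shuf 1 j (ups_e n) G x = (\<Sum>a<N. x a powi n * ((\<Prod>b\<in>{..<N}-{a}. x b powi s) * QQ N (qq powi (-2)) x a * c0)
            * (\<Prod>b\<in>{..<N}-{a}. (x a - qq powi (-2) * x b) / (x a - x b)))"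
proof -
  define S where "S = {..<N}"
  define h where "h a = x a powi n * ((\<Prod>b\<in>S-{a}. x b powi s) * QQ N (qq powi (-2)) x a * c0)
            * (\<Prod>b\<in>S-{a}. (x a - qq powi (-2) * x b) / (x a - x b))" for a
  have summand: "ups_e n (x \<circ> \<sigma>) * G (\<lambda>i. x (\<sigma> (1 + i))) *
        (\<Prod>r<1. \<Prod>r'\<in>{1..<1 + j}. (x (\<sigma> r) - qq powi (-2) * x (\<sigma> r')) / (x (\<sigma> r) - x (\<sigma> r')))
      = h (\<sigma> 0)" if p: "\<sigma> permutes S" for \<sigma>
  proof -
    have s0: "\<sigma> 0 \<in> S" using permutes_in_image[OF p, of 0] by (simp add: S_def N)
    have img1: "\<sigma> ` {1..<N} = S - {\<sigma> 0}"
    proof -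
      have "{1..<N} = S - {0}" by (auto simp: S_def)
      then show ?thesis using perm_img_diff[OF p, of 0] by (simp add: S_def N)
    qed
    have injs: "inj_on \<sigma> A" for A using permutes_inj[OF p] by (rule inj_on_subset) simp
    have imgg: "(\<lambda>i. \<sigma> (Suc i)) ` {..<j} = S - {\<sigma> 0}"
    proof -
      have "(\<lambda>i. \<sigma> (Suc i)) ` {..<j} = \<sigma> ` (Suc ` {..<j})" by (simp add: image_image)
      also have "Suc ` {..<j} = {1..<N}" by (simp add: N image_Suc_lessThan atLeastLessThanSuc_atLeastAtMost)
      finally show ?thesis using img1 by simp
    qed
    have injg: "inj_on (\<lambda>i. \<sigma> (Suc i)) {..<j}"
      by (auto simp: inj_on_def dest: injD[OF permutes_inj[OF p]])
    have yinj: "inj_on (\<lambda>i. x (\<sigma> (Suc i))) {..<j}"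
    proof -
      have "inj_on x (S - {\<sigma> 0})" using inj by (rule inj_on_subset) (auto simp: S_def)
      then show ?thesis using comp_inj_on[OF injg, of x] imgg by (simp add: comp_def)
    qed
    have ynz: "\<forall>r<j. x (\<sigma> (Suc r)) \<noteq> 0"
    proof (intro allI impI)
      fix r assume "r < j"
      then have "\<sigma> (Suc r) < N" using permutes_in_image[OF p, of "Suc r"] by (simp add: S_def N)
      then show "x (\<sigma> (Suc r)) \<noteq> 0" using nz by blast
    qed
    have "G (\<lambda>i. x (\<sigma> (1 + i))) = Ekn j s (\<lambda>i. x (\<sigma> (Suc i))) * c0"
      using G[OF yinj ynz] by simp
    also have "Ekn j s (\<lambda>i. x (\<sigma> (Suc i))) = (\<Prod>b\<in>S-{\<sigma> 0}. x b powi s) * QQ N (qq powi (-2)) x (\<sigma> 0)"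
      unfolding Ekn_reindex[OF injg imgg] QQ_def S_def ..
    finally have eG: "G (\<lambda>i. x (\<sigma> (1 + i))) = (\<Prod>b\<in>S-{\<sigma> 0}. x b powi s) * QQ N (qq powi (-2)) x (\<sigma> 0) * c0" .
    have eP: "(\<Prod>r<1. \<Prod>r'\<in>{1..<1 + j}. (x (\<sigma> r) - qq powi (-2) * x (\<sigma> r')) / (x (\<sigma> r) - x (\<sigma> r')))
       = (\<Prod>b\<in>S-{\<sigma> 0}. (x (\<sigma> 0) - qq powi (-2) * x b) / (x (\<sigma> 0) - x b))"
    proof -
      have "(\<Prod>r<1. \<Prod>r'\<in>{1..<1 + j}. (x (\<sigma> r) - qq powi (-2) * x (\<sigma> r')) / (x (\<sigma> r) - x (\<sigma> r')))
          = (\<Prod>r'\<in>{1..<N}. (x (\<sigma> 0) - qq powi (-2) * x (\<sigma> r')) / (x (\<sigma> 0) - x (\<sigma> r')))"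
        by (simp add: N)
      also have "\<dots> = (\<Prod>b\<in>S-{\<sigma> 0}. (x (\<sigma> 0) - qq powi (-2) * x b) / (x (\<sigma> 0) - x b))"
        using prod.reindex[OF injs[of "{1..<N}"], of "\<lambda>b. (x (\<sigma> 0) - qq powi (-2) * x b) / (x (\<sigma> 0) - x b)"] img1
        by simp
      finally show ?thesis .
    qed
    show ?thesis unfolding eG eP h_def ups_e_def by simp
  qed
  have "shuf 1 j (ups_e n) G x = 1 / of_nat (fact 1 * fact j) * (\<Sum>\<sigma>\<in>{\<sigma>. \<sigma> permutes {..<1 + j}}. ups_e n (x \<circ> \<sigma>) * G (\<lambda>i. x (\<sigma> (1 + i))) *
        (\<Prod>r<1. \<Prod>r'\<in>{1..<1 + j}. (x (\<sigma> r) - qq powi (-2) * x (\<sigma> r')) / (x (\<sigma> r) - x (\<sigma> r'))))"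
    unfolding shuf_def ..
  also have "{..<1 + j} = S" by (simp add: S_def N)
  also have "(\<Sum>\<sigma>\<in>{\<sigma>. \<sigma> permutes S}. ups_e n (x \<circ> \<sigma>) * G (\<lambda>i. x (\<sigma> (1 + i))) *
        (\<Prod>r<1. \<Prod>r'\<in>{1..<1 + j}. (x (\<sigma> r) - qq powi (-2) * x (\<sigma> r')) / (x (\<sigma> r) - x (\<sigma> r'))))
      = (\<Sum>\<sigma>\<in>{\<sigma>. \<sigma> permutes S}. h (\<sigma> 0))"
    by (rule sum.cong[OF refl], rule summand, simp)
  also have "1 / of_nat (fact 1 * fact j) * (\<Sum>\<sigma>\<in>{\<sigma>. \<sigma> permutes S}. h (\<sigma> 0)) = (\<Sum>a\<in>S. h a)"
    using sum_perm_eval[of S 0 h] of_nat_K_nz[of "fact j"] by (simp add: S_def N)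
  finally show ?thesis by (simp add: h_def S_def)
qed

lemma shuf2_eval:
  fixes x :: "nat \<Rightarrow> K" and G :: sh
  assumes N: "N = Suc j" and inj: "inj_on x {..<N}" and nz: "\<forall>r<N. x r \<noteq> 0"
    and G: "\<And>y. inj_on y {..<j} \<Longrightarrow> (\<forall>r<j. y r \<noteq> 0) \<Longrightarrow> G y = Ekn j s y * c0"
  shows "shuf j 1 G (ups_e n) x = (\<Sum>a<N. ((\<Prod>b\<in>{..<N}-{a}. x b powi s) * QQ N (qq powi (-2)) x a * c0) * x a powi n
            * (\<Prod>b\<in>{..<N}-{a}. (x b - qq powi (-2) * x a) / (x b - x a)))"
proof -
  define S where "S = {..<N}"
  define h where "h a = ((\<Prod>b\<in>S-{a}. x b powi s) * QQ N (qq powi (-2)) x a * c0) * x a powi n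
            * (\<Prod>b\<in>S-{a}. (x b - qq powi (-2) * x a) / (x b - x a))" for a
  have summand: "G (x \<circ> \<sigma>) * ups_e n (\<lambda>i. x (\<sigma> (j + i))) *
        (\<Prod>r<j. \<Prod>r'\<in>{j..<j + 1}. (x (\<sigma> r) - qq powi (-2) * x (\<sigma> r')) / (x (\<sigma> r) - x (\<sigma> r')))
      = h (\<sigma> j)" if p: "\<sigma> permutes S" for \<sigma>
  proof -
    have jS: "j \<in> S" by (simp add: S_def N)
    have Sj: "{..<j} = S - {j}" by (auto simp: S_def N)
    have img: "\<sigma> ` {..<j} = S - {\<sigma> j}" unfolding Sj by (rule perm_img_diff[OF p jS])
    have injs: "inj_on \<sigma> A" for A using permutes_inj[OF p] by (rule inj_on_subset) simp
    have yinj: "inj_on (\<lambda>i. x (\<sigma> i)) {..<j}"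
    proof -
      have "inj_on x (S - {\<sigma> j})" using inj by (rule inj_on_subset) (auto simp: S_def)
      then show ?thesis using comp_inj_on[OF injs[of "{..<j}"], of x] img by (simp add: comp_def)
    qed
    have ynz: "\<forall>r<j. x (\<sigma> r) \<noteq> 0"
    proof (intro allI impI)
      fix r assume "r < j"
      then have "\<sigma> r < N" using permutes_in_image[OF p, of r] by (simp add: S_def N)
      then show "x (\<sigma> r) \<noteq> 0" using nz by blast
    qed
    have "G (x \<circ> \<sigma>) = Ekn j s (\<lambda>i. x (\<sigma> i)) * c0"
      using G[OF yinj ynz] by (simp add: comp_def)
    also have "Ekn j s (\<lambda>i. x (\<sigma> i)) = (\<Prod>b\<in>S-{\<sigma> j}. x b powi s) * QQ N (qq powi (-2)) x (\<sigma> j)"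
      unfolding Ekn_reindex[OF injs img] QQ_def S_def ..
    finally have eG: "G (x \<circ> \<sigma>) = (\<Prod>b\<in>S-{\<sigma> j}. x b powi s) * QQ N (qq powi (-2)) x (\<sigma> j) * c0" .
    have eP: "(\<Prod>r<j. \<Prod>r'\<in>{j..<j + 1}. (x (\<sigma> r) - qq powi (-2) * x (\<sigma> r')) / (x (\<sigma> r) - x (\<sigma> r')))
       = (\<Prod>b\<in>S-{\<sigma> j}. (x b - qq powi (-2) * x (\<sigma> j)) / (x b - x (\<sigma> j)))"
    proof -
      have "(\<Prod>r<j. \<Prod>r'\<in>{j..<j + 1}. (x (\<sigma> r) - qq powi (-2) * x (\<sigma> r')) / (x (\<sigma> r) - x (\<sigma> r')))
          = (\<Prod>r<j. (x (\<sigma> r) - qq powi (-2) * x (\<sigma> j)) / (x (\<sigma> r) - x (\<sigma> j)))"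
        by simp
      also have "\<dots> = (\<Prod>b\<in>S-{\<sigma> j}. (x b - qq powi (-2) * x (\<sigma> j)) / (x b - x (\<sigma> j)))"
        using prod.reindex[OF injs[of "{..<j}"], of "\<lambda>b. (x b - qq powi (-2) * x (\<sigma> j)) / (x b - x (\<sigma> j))"] img
        by simp
      finally show ?thesis .
    qed
    show ?thesis unfolding eG eP h_def ups_e_def by simp
  qed
  have "shuf j 1 G (ups_e n) x = 1 / of_nat (fact j * fact 1) * (\<Sum>\<sigma>\<in>{\<sigma>. \<sigma> permutes {..<j + 1}}. G (x \<circ> \<sigma>) * ups_e n (\<lambda>i. x (\<sigma> (j + i))) *
        (\<Prod>r<j. \<Prod>r'\<in>{j..<j + 1}. (x (\<sigma> r) - qq powi (-2) * x (\<sigma> r')) / (x (\<sigma> r) - x (\<sigma> r'))))"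
    unfolding shuf_def ..
  also have "{..<j + 1} = S" by (simp add: S_def N)
  also have "(\<Sum>\<sigma>\<in>{\<sigma>. \<sigma> permutes S}. G (x \<circ> \<sigma>) * ups_e n (\<lambda>i. x (\<sigma> (j + i))) *
        (\<Prod>r<j. \<Prod>r'\<in>{j..<j + 1}. (x (\<sigma> r) - qq powi (-2) * x (\<sigma> r')) / (x (\<sigma> r) - x (\<sigma> r'))))
      = (\<Sum>\<sigma>\<in>{\<sigma>. \<sigma> permutes S}. h (\<sigma> j))"
    by (rule sum.cong[OF refl], rule summand, simp)
  also have "1 / of_nat (fact j * fact 1) * (\<Sum>\<sigma>\<in>{\<sigma>. \<sigma> permutes S}. h (\<sigma> j)) = (\<Sum>a\<in>S. h a)"
    using sum_perm_eval[of S j h] of_nat_K_nz[of "fact j"] by (simp add: S_def N)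
  finally show ?thesis by (simp add: h_def S_def)
qed

definition CC :: "nat \<Rightarrow> K" where
  "CC k = (-1) ^ (k * (k - 1) div 2) / (1 - qq powi (-2)) ^ (k - 1)"

lemma CC_nz: "CC k \<noteq> 0"
  using t_ne1 by (simp add: CC_def)

lemma div_arith: "(Suc j * j) div 2 = j * (j - 1) div 2 + j"
proof (induction j)
  case 0 then show ?case by simp
next
  case (Suc j)
  have "Suc (Suc j) * Suc j = Suc j * j + 2 * Suc j" by simp
  then have "Suc (Suc j) * Suc j div 2 = Suc j * j div 2 + Suc j" by simp
  then show ?case by simp
qed

lemma CC_step:
  assumes "j \<ge> 1"
  shows "CC (Suc j) * ((-1) ^ j * (1 - qq powi (-2))) = CC j"
proof -
  obtain m where j: "j = Suc m" using assms by (cases j) auto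
  have t1: "1 - qq powi (-2) \<noteq> 0" using t_ne1 by simp
  define u where "u = 1 - qq powi (-2)"
  define a where "a = j * (j - 1) div 2"
  have e: "Suc j * (Suc j - 1) div 2 = a + j" using div_arith[of j] by (simp add: a_def)
  have ss: "(-1::K) ^ j * (-1) ^ j = 1" by (simp flip: power_mult_distrib)
  have uu: "u ^ j = u ^ (j - 1) * u" using assms by (cases j) (simp_all add: mult.commute)
  have "CC (Suc j) = (-1) ^ a * (-1) ^ j / (u ^ (j - 1) * u)"
    unfolding CC_def e u_def[symmetric] power_add by (simp add: uu)
  moreover have "CC j = (-1) ^ a / u ^ (j - 1)" unfolding CC_def a_def u_def ..
  moreover have "u \<noteq> 0" using t1 by (simp add: u_def)
  moreover have "(-1) ^ a * (-1) ^ j / (u ^ (j - 1) * u) * ((-1) ^ j * u) = (-1) ^ a * ((-1::K) ^ j * (-1) ^ j) / u ^ (j - 1)"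
    using \<open>u \<noteq> 0\<close> by (simp add: field_simps)
  ultimately show ?thesis unfolding u_def[symmetric] ss by simp
qed

lemma nestY_step_eq:
  fixes x :: "nat \<Rightarrow> K"
  assumes j: "j = Suc m" and N: "N = Suc j"
    and IH: "\<And>y. inj_on y {..<j} \<Longrightarrow> (\<forall>r<j. y r \<noteq> 0) \<Longrightarrow> Ekn j (n + 2) y = CC j * nestY j (n + 2) y"
    and inj: "inj_on x {..<N}" and nz: "\<forall>r<N. x r \<noteq> 0"
  shows "Ekn N n x = CC N * nestY N n x"
proof -
  define t where "t = qq powi (-2)"
  define c0 where "c0 = 1 / CC j"
  have G: "nestY j (n + 2) y = Ekn j (n + 2) y * c0" if "inj_on y {..<j}" "\<forall>r<j. y r \<noteq> 0" for y
    using IH[OF that] CC_nz[of j] by (simp add: c0_def field_simps)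
  have c: "qq powi (-2 * (int m + 2)) = t ^ N"
  proof -
    have e: "-2 * (int m + 2) = (-2) * int N" by (simp add: N j)
    have "qq powi ((-2) * int N) = (qq powi (-2)) powi (int N)" by (rule power_int_mult)
    then show ?thesis unfolding e t_def by simp
  qed
  have nest: "nestY N n x = shuf 1 j (ups_e n) (nestY j (n + 2)) x - t ^ N * shuf j 1 (nestY j (n + 2)) (ups_e n) x"
  proof -
    have "nestY N n x = qbr 1 j (qq powi (-2 * (int m + 2))) (ups_e n) (nestY j (n + 2)) x"
      unfolding N j by (simp only: nestY.simps)
    then show ?thesis by (simp only: qbr_def c)
  qed
  define Pn where "Pn = (\<Prod>b<N. x b powi n)"
  have fa: "x a powi n * (\<Prod>b\<in>{..<N}-{a}. x b powi (n + 2)) = Pn * (\<Prod>b\<in>{..<N}-{a}. x b ^ 2)" if a: "a < N" for a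
  proof -
    have "(\<Prod>b\<in>{..<N}-{a}. x b powi (n + 2)) = (\<Prod>b\<in>{..<N}-{a}. x b powi n * x b ^ 2)"
      by (rule prod.cong[OF refl]) (use nz in \<open>auto simp: power_int_add\<close>)
    also have "\<dots> = (\<Prod>b\<in>{..<N}-{a}. x b powi n) * (\<Prod>b\<in>{..<N}-{a}. x b ^ 2)" by (rule prod.distrib)
    finally have "x a powi n * (\<Prod>b\<in>{..<N}-{a}. x b powi (n + 2)) = (x a powi n * (\<Prod>b\<in>{..<N}-{a}. x b powi n)) * (\<Prod>b\<in>{..<N}-{a}. x b ^ 2)"
      by (simp add: mult.assoc)
    also have "x a powi n * (\<Prod>b\<in>{..<N}-{a}. x b powi n) = Pn" unfolding Pn_def using a by (simp add: prod.remove)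
    finally show ?thesis .
  qed
  have sh1: "shuf 1 j (ups_e n) (nestY j (n + 2)) x = (\<Sum>a<N. x a powi n * ((\<Prod>b\<in>{..<N}-{a}. x b powi (n + 2)) * QQ N (qq powi (-2)) x a * c0)
            * (\<Prod>b\<in>{..<N}-{a}. (x a - qq powi (-2) * x b) / (x a - x b)))"
    by (rule shuf1_eval[OF N inj nz]) (rule G)
  have sh2: "shuf j 1 (nestY j (n + 2)) (ups_e n) x = (\<Sum>a<N. ((\<Prod>b\<in>{..<N}-{a}. x b powi (n + 2)) * QQ N (qq powi (-2)) x a * c0) * x a powi n
            * (\<Prod>b\<in>{..<N}-{a}. (x b - qq powi (-2) * x a) / (x b - x a)))"
    by (rule shuf2_eval[OF N inj nz]) (rule G)
  have s1: "shuf 1 j (ups_e n) (nestY j (n + 2)) x = c0 * Pn * T1 N t x"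
    unfolding sh1 T1_def sum_distrib_left t_def
  proof (rule sum.cong[OF refl])
    fix a assume "a \<in> {..<N}"
    then have a: "a < N" by simp
    show "x a powi n * ((\<Prod>b\<in>{..<N}-{a}. x b powi (n + 2)) * QQ N (qq powi (-2)) x a * c0) * (\<Prod>b\<in>{..<N}-{a}. (x a - qq powi (-2) * x b) / (x a - x b))
      = c0 * Pn * ((\<Prod>b\<in>{..<N}-{a}. x b ^ 2) * QQ N (qq powi (-2)) x a * (\<Prod>b\<in>{..<N}-{a}. (x a - qq powi (-2) * x b) / (x a - x b)))"
      using fa[OF a] by (simp add: ac_simps)
  qed
  have s2: "shuf j 1 (nestY j (n + 2)) (ups_e n) x = c0 * Pn * T2 N t x"
    unfolding sh2 T2_def sum_distrib_left t_def
  proof (rule sum.cong[OF refl])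
    fix a assume "a \<in> {..<N}"
    then have a: "a < N" by simp
    show "(\<Prod>b\<in>{..<N}-{a}. x b powi (n + 2)) * QQ N (qq powi (-2)) x a * c0 * x a powi n * (\<Prod>b\<in>{..<N}-{a}. (x b - qq powi (-2) * x a) / (x b - x a))
      = c0 * Pn * ((\<Prod>b\<in>{..<N}-{a}. x b ^ 2) * QQ N (qq powi (-2)) x a * (\<Prod>b\<in>{..<N}-{a}. (x b - qq powi (-2) * x a) / (x b - x a)))"
      using fa[OF a] by (simp add: ac_simps)
  qed
  have phi: "Phi N t x = 0"
    by (rule Phi_zero[OF infinite_K N _ _ inj]) (simp_all add: t_def t_nz t_ne1 qq_nz)
  have E: "Ekn N n x = Pn * FF N t x" unfolding Ekn_def FF_def Pn_def t_def ..
  have "nestY N n x = c0 * Pn * (T1 N t x - t ^ N * T2 N t x)"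
    unfolding nest s1 s2 by (simp add: algebra_simps)
  also have "T1 N t x - t ^ N * T2 N t x = (-1) ^ j * (1 - t) * FF N t x"
    using phi unfolding Phi_def by (simp add: N)
  finally have "nestY N n x = c0 * ((-1) ^ j * (1 - t)) * Ekn N n x" unfolding E by (simp add: ac_simps)
  then have "CC N * nestY N n x = (CC N * ((-1) ^ j * (1 - t))) * c0 * Ekn N n x" by (simp add: ac_simps)
  also have "CC N * ((-1) ^ j * (1 - t)) = CC j" unfolding N t_def by (rule CC_step) (simp add: j)
  finally show ?thesis using CC_nz[of j] by (simp add: c0_def)
qed

lemma main_gen:
  fixes k :: nat
  assumes "k \<ge> 1"
  shows "\<forall>n x. inj_on x {..<k} \<longrightarrow> (\<forall>r<k. (x :: nat \<Rightarrow> K) r \<noteq> 0) \<longrightarrow> Ekn k n x = CC k * nestY k n x"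
  using assms
proof (induction k)
  case 0 then show ?case by simp
next
  case (Suc j)
  show ?case
  proof (cases j)
    case 0
    show ?thesis unfolding 0 by (simp add: Ekn_def CC_def ups_e_def lessThan_Suc)
  next
    case (Suc m)
    have IH: "\<forall>n x. inj_on x {..<j} \<longrightarrow> (\<forall>r<j. (x :: nat \<Rightarrow> K) r \<noteq> 0) \<longrightarrow> Ekn j n x = CC j * nestY j n x"
      using Suc.IH Suc by simp
    show ?thesis
    proof (intro allI impI)
      fix n and x :: "nat \<Rightarrow> K"
      assume "inj_on x {..<Suc j}" "\<forall>r<Suc j. x r \<noteq> 0"
      then show "Ekn (Suc j) n x = CC (Suc j) * nestY (Suc j) n x"
        by (intro nestY_step_eq[OF Suc refl]) (use IH in auto)
    qed
  qed
qed

theorem lemma6p1: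
  fixes k :: nat and n :: int and x :: "nat \<Rightarrow> K"
  assumes "k \<ge> 1"
    and "inj_on x {..<k}"
    and "\<forall>r<k. x r \<noteq> 0"
  shows "Ekn k n x =
    ((-1) ^ (k * (k - 1) div 2) / (1 - qq powi (-2)) ^ (k - 1)) * nestY k n x"
  using main_gen[OF assms(1)] assms(2,3) unfolding CC_def by blast

end
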